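(* Let $q$ be a prime power and $\mathcal{S}$ a $q$-divisible spanning set of $q^2$ points in $\mathrm{PG}(3,q)$ that is not a $2$-cylinder. Then every line $L$ of $\mathrm{PG}(3,q)$ satisfies $|L\cap\mathcal{S}|\le q-2$.
   Context: $\mathrm{PG}(3,q)$ is the projective space of $\mathbb{F}_q^4$; points, lines and planes are subspaces of dimension $1,2,3$. A set $\mathcal{S}$ of points is spanning if it spans $\mathbb{F}_q^4$, and it is $q$-divisible if $|\mathcal{S}\cap H|\equiv|\mathcal{S}|\pmod q$ for every plane $H$. A $2$-cylinder is a set of $q^2$ points of the form $\bigcup_{i=1}^q (L_i\setminus\{F\})$, where $L_1,\dots,L_q$ are distinct lines through a common point $F$ (and $L_i\setminus\{F\}$ denotes the set of points of $L_i$ other than $F$). *)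

theory Defs
  imports "HOL-Analysis.Analysis"
begin

text \<open>PG(3,q) over a finite field 'a with q = CARD('a): points, lines, planes are the
  linear subspaces of 'a^4 of (vector space) dimension 1, 2, 3.\<close>

definition pg_sub :: "nat \<Rightarrow> ('a::field ^ 4) set \<Rightarrow> bool" where
  "pg_sub k W \<longleftrightarrow> vec.subspace W \<and> vec.dim W = k"

abbreviation pg_point :: "('a::field ^ 4) set \<Rightarrow> bool" where "pg_point \<equiv> pg_sub 1"
abbreviation pg_line  :: "('a::field ^ 4) set \<Rightarrow> bool" where "pg_line \<equiv> pg_sub 2"
abbreviation pg_plane :: "('a::field ^ 4) set \<Rightarrow> bool" where "pg_plane \<equiv> pg_sub 3"

definition spanning :: "('a::field ^ 4) set set \<Rightarrow> bool" where
  "spanning S \<longleftrightarrow> vec.span (\<Union>S) = UNIV"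

definition meet_card :: "('a::field ^ 4) set set \<Rightarrow> ('a ^ 4) set \<Rightarrow> nat" where
  "meet_card S W = card {P \<in> S. P \<subseteq> W}"

definition q_divisible :: "nat \<Rightarrow> ('a::field ^ 4) set set \<Rightarrow> bool" where
  "q_divisible q S \<longleftrightarrow> (\<forall>H. pg_plane H \<longrightarrow> meet_card S H mod q = card S mod q)"

definition two_cylinder :: "nat \<Rightarrow> ('a::field ^ 4) set set \<Rightarrow> bool" where
  "two_cylinder q S \<longleftrightarrow> (\<exists>F Ls. pg_point F \<and> card Ls = q \<and>
      (\<forall>L\<in>Ls. pg_line L \<and> F \<subseteq> L) \<and>
      S = {P. pg_point P \<and> P \<noteq> F \<and> (\<exists>L\<in>Ls. P \<subseteq> L)})"

end

theory Submission
  imports Defs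
begin

lemma card_subspace:
  fixes W :: "('a::{field,finite}^'n) set"
  assumes "vec.subspace W"
  shows "card W = CARD('a) ^ vec.dim W"
proof -
  obtain B where B: "B \<subseteq> W" "vec.independent B" "W \<subseteq> vec.span B" "card B = vec.dim W"
    using vec.basis_exists by blast
  have fB: "finite B" by simp
  have WB: "W = vec.span B" using B assms vec.span_minimal by blast
  let ?f = "\<lambda>u. \<Sum>v\<in>B. u v *s v"
  let ?P = "PiE B (\<lambda>_. (UNIV::'a set))"
  have im: "vec.span B = ?f ` ?P"
  proof -
    have "range ?f = ?f ` ?P"
    proof
      show "range ?f \<subseteq> ?f ` ?P"
      proof
        fix x assume "x \<in> range ?f"
        then obtain u where x: "x = ?f u" by blast
        have "x = ?f (restrict u B)" unfolding x by (intro sum.cong) auto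
        moreover have "restrict u B \<in> ?P" by auto
        ultimately show "x \<in> ?f ` ?P" by blast
      qed
    qed auto
    then show ?thesis using vec.span_finite[OF fB] by simp
  qed
  have inj: "inj_on ?f ?P"
  proof (rule inj_onI)
    fix u u' assume u: "u \<in> ?P" and u': "u' \<in> ?P" and eq: "?f u = ?f u'"
    have "(\<Sum>v\<in>B. (u v - u' v) *s v) = ?f u - ?f u'"
      by (simp add: vec.scale_left_diff_distrib sum_subtractf)
    also have "\<dots> = 0" using eq by simp
    finally have z: "(\<Sum>v\<in>B. (u v - u' v) *s v) = 0" .
    have ind: "\<forall>c. (\<Sum>v\<in>B. c v *s v) = 0 \<longrightarrow> (\<forall>v\<in>B. c v = 0)"
      using B(2) vec.independent_explicit by blast
    have "\<forall>v\<in>B. u v - u' v = 0" using spec[OF ind, of "\<lambda>v. u v - u' v"] z by simp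
    then show "u = u'" using u u' by (intro PiE_ext) auto
  qed
  have "card W = card (?f ` ?P)" using WB im by simp
  also have "\<dots> = card ?P" using card_image[OF inj] .
  also have "\<dots> = CARD('a) ^ card B" using fB by (simp add: card_PiE)
  finally show ?thesis using B(4) by simp
qed

lemma span_step_unique:
  fixes U X :: "('a::field^'n) set"
  assumes "vec.subspace U" "vec.subspace X" "U \<subseteq> X" "w \<in> X" "w \<notin> U"
    "vec.dim X = vec.dim U + 1"
  shows "X = vec.span (insert w U)"
proof -
  have sub: "vec.span (insert w U) \<subseteq> X" using assms by (simp add: vec.span_minimal)
  have "w \<notin> vec.span U" using assms vec.span_eq_iff by blast
  then have "vec.dim (vec.span (insert w U)) = vec.dim U + 1" by (simp add: vec.dim_insert)
  then show ?thesis using vec.subspace_dim_equal[OF vec.subspace_span assms(2) sub] assms(6) by simp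
qed

lemma span_step_props:
  fixes U W :: "('a::field^'n) set"
  assumes "vec.subspace U" "vec.subspace W" "U \<subseteq> W" "w \<in> W" "w \<notin> U"
  shows "vec.subspace (vec.span (insert w U))" "vec.dim (vec.span (insert w U)) = vec.dim U + 1"
    "U \<subseteq> vec.span (insert w U)" "vec.span (insert w U) \<subseteq> W" "w \<in> vec.span (insert w U)"
proof -
  have "w \<notin> vec.span U" using assms vec.span_eq_iff by blast
  then show "vec.dim (vec.span (insert w U)) = vec.dim U + 1" by (simp add: vec.dim_insert)
  show "vec.subspace (vec.span (insert w U))" by simp
  show "U \<subseteq> vec.span (insert w U)" using vec.span_superset by blast
  show "vec.span (insert w U) \<subseteq> W" using assms by (simp add: vec.span_minimal)
  show "w \<in> vec.span (insert w U)" using vec.span_superset by blast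
qed

lemma count_step:
  fixes U W :: "('a::{field,finite}^4) set"
  assumes sU: "vec.subspace U" and sW: "vec.subspace W" and UW: "U \<subseteq> W"
  shows "card {X. pg_sub (vec.dim U + 1) X \<and> U \<subseteq> X \<and> X \<subseteq> W} *
     (CARD('a)^(vec.dim U + 1) - CARD('a)^vec.dim U) = CARD('a)^vec.dim W - CARD('a)^vec.dim U"
proof -
  let ?Xs = "{X. pg_sub (vec.dim U + 1) X \<and> U \<subseteq> X \<and> X \<subseteq> W}"
  have part: "W - U = (\<Union>X\<in>?Xs. X - U)"
  proof
    show "W - U \<subseteq> (\<Union>X\<in>?Xs. X - U)"
    proof
      fix w assume w: "w \<in> W - U"
      note p = span_step_props[OF sU sW UW, of w]
      have "vec.span (insert w U) \<in> ?Xs" using p w unfolding pg_sub_def by auto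
      then show "w \<in> (\<Union>X\<in>?Xs. X - U)" using p w by blast
    qed
  qed auto
  have disj: "\<forall>X\<in>?Xs. \<forall>Y\<in>?Xs. X \<noteq> Y \<longrightarrow> (X - U) \<inter> (Y - U) = {}"
  proof (intro ballI impI)
    fix X Y assume X: "X \<in> ?Xs" and Y: "Y \<in> ?Xs" and ne: "X \<noteq> Y"
    show "(X - U) \<inter> (Y - U) = {}"
    proof (rule ccontr)
      assume "(X - U) \<inter> (Y - U) \<noteq> {}"
      then obtain w where "w \<in> X" "w \<in> Y" "w \<notin> U" by blast
      then have "X = vec.span (insert w U)" "Y = vec.span (insert w U)"
        using span_step_unique[OF sU] X Y unfolding pg_sub_def by auto
      then show False using ne by simp
    qed
  qed
  have cX: "card (X - U) = CARD('a)^(vec.dim U + 1) - CARD('a)^vec.dim U" if "X \<in> ?Xs" for X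
    using that card_subspace[OF sU] card_subspace[of X] card_Diff_subset[of U X]
    unfolding pg_sub_def by auto
  have "CARD('a)^vec.dim W - CARD('a)^vec.dim U = card (W - U)"
    using card_subspace[OF sU] card_subspace[OF sW] card_Diff_subset[OF _ UW] by simp
  also have "\<dots> = (\<Sum>X\<in>?Xs. card (X - U))"
    unfolding part by (rule card_UN_disjoint) (use disj in auto)
  also have "\<dots> = card ?Xs * (CARD('a)^(vec.dim U + 1) - CARD('a)^vec.dim U)"
    using cX by simp
  finally show ?thesis by simp
qed

lemma arith_count:
  fixes q c d :: nat
  assumes q: "2 \<le> q" and h: "c * (q^(d+1) - q^d) = q^(d+2) - q^d"
  shows "c = q + 1"
proof -
  define a where "a = q^d"
  have a: "a > 0" using q unfolding a_def by simp
  have e1: "q^(d+1) - q^d = a * (q - 1)" unfolding a_def by (simp add: algebra_simps diff_mult_distrib2)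
  have e2: "q^(d+2) - q^d = (q + 1) * (a * (q - 1))"
  proof -
    have "q^(d+2) = a * (q*q)" unfolding a_def by (simp add: power_add power2_eq_square mult_ac)
    then have "q^(d+2) - q^d = a * (q*q) - a * 1" unfolding a_def by (simp only: mult_1_right)
    then have "q^(d+2) - q^d = a * (q*q - 1)" by (simp only: diff_mult_distrib2)
    moreover have "q*q - 1 = (q+1)*(q-1)" by (cases q) auto
    ultimately show ?thesis by (simp only: mult_ac)
  qed
  define x where "x = a * (q - 1)"
  have "c * x = (q + 1) * x" using h e1 e2 unfolding x_def by (simp only:)
  moreover have "x > 0" using a q unfolding x_def by simp
  ultimately show ?thesis by (metis mult_right_cancel neq0_conv)
qed

lemma card_ge2: "2 \<le> CARD('a::{field,finite})"
proof -
  have "(0::'a) \<noteq> 1" by simp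
  then have "card {0::'a, 1} = 2" by simp
  moreover have "card {0::'a, 1} \<le> CARD('a)" by (rule card_mono) auto
  ultimately show ?thesis by simp
qed

lemma dim0: "vec.dim {0::'a::field^'n} = 0" by simp

lemma point_span:
  fixes P :: "('a::field^4) set"
  assumes "pg_point P" "v \<in> P" "v \<noteq> 0"
  shows "P = vec.span {v}"
proof -
  have "P = vec.span (insert v {0})"
    using span_step_unique[of "{0}" P v] assms unfolding pg_sub_def by (auto simp: vec.subspace_0)
  moreover have "insert v {0} = insert 0 {v}" by auto
  ultimately show ?thesis by (simp only: vec.span_insert_0)
qed

lemma point_nonzero:
  fixes P :: "('a::field^4) set"
  assumes "pg_point P"
  obtains v where "v \<in> P" "v \<noteq> 0"
proof -
  have "vec.dim P = 1" using assms unfolding pg_sub_def by simp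
  then have "\<not> P \<subseteq> {0}" using vec.dim_eq_0[of P] by simp
  then show ?thesis using that by blast
qed

lemma point_sub_iff:
  fixes P H :: "('a::field^4) set"
  assumes "pg_point P" "v \<in> P" "v \<noteq> 0" "vec.subspace H"
  shows "P \<subseteq> H \<longleftrightarrow> v \<in> H"
proof
  assume "P \<subseteq> H" then show "v \<in> H" using assms(2) by blast
next
  assume "v \<in> H"
  then have "vec.span {v} \<subseteq> H" using assms(4) vec.span_minimal[of "{v}" H] by simp
  then show "P \<subseteq> H" using point_span[OF assms(1-3)] by simp
qed

lemma unique_ext:
  fixes U Q :: "('a::field^4) set"
  assumes sU: "vec.subspace U" and Q: "pg_point Q" and nQ: "\<not> Q \<subseteq> U"
  shows "\<exists>w. w \<in> Q \<and> w \<notin> U \<and>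
     {X. pg_sub (vec.dim U + 1) X \<and> U \<subseteq> X \<and> Q \<subseteq> X} = {vec.span (insert w U)}"
proof -
  obtain w where w: "w \<in> Q" "w \<notin> U" using nQ by blast
  have w0: "w \<noteq> 0" using w vec.subspace_0[OF sU] by auto
  note p = span_step_props[OF sU vec.subspace_UNIV subset_UNIV, of w]
  have "{X. pg_sub (vec.dim U + 1) X \<and> U \<subseteq> X \<and> Q \<subseteq> X} = {vec.span (insert w U)}"
  proof
    show "{X. pg_sub (vec.dim U + 1) X \<and> U \<subseteq> X \<and> Q \<subseteq> X} \<subseteq> {vec.span (insert w U)}"
    proof
      fix X assume "X \<in> {X. pg_sub (vec.dim U + 1) X \<and> U \<subseteq> X \<and> Q \<subseteq> X}"
      then have X: "vec.subspace X" "vec.dim X = vec.dim U + 1" "U \<subseteq> X" "w \<in> X"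
        using w(1) unfolding pg_sub_def by auto
      show "X \<in> {vec.span (insert w U)}"
        using span_step_unique[OF sU X(1) X(3) X(4) w(2) X(2)] by simp
    qed
    have "Q \<subseteq> vec.span (insert w U)" using point_sub_iff[OF Q w(1) w0] p(1,5) w(2) by blast
    then show "{vec.span (insert w U)} \<subseteq> {X. pg_sub (vec.dim U + 1) X \<and> U \<subseteq> X \<and> Q \<subseteq> X}"
      using p(1-3) w(2) unfolding pg_sub_def by simp
  qed
  then show ?thesis using w by blast
qed

lemma point_eq:
  fixes P Q :: "('a::field^4) set"
  assumes "pg_point P" "pg_point Q" "Q \<subseteq> P" shows "Q = P"
proof -
  have "vec.subspace P" "vec.subspace Q" "vec.dim P \<le> vec.dim Q" using assms unfolding pg_sub_def by auto
  then show ?thesis using vec.subspace_dim_equal[of Q P] assms(3) by simp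
qed

lemma count_pts_line:
  fixes L :: "('a::{field,finite}^4) set"
  assumes "pg_line L"
  shows "card {P. pg_point P \<and> P \<subseteq> L} = CARD('a) + 1"
proof -
  have e: "{P. pg_point P \<and> P \<subseteq> L} = {X. pg_sub (vec.dim {0::'a^4} + 1) X \<and> {0} \<subseteq> X \<and> X \<subseteq> L}"
    unfolding pg_sub_def by (auto simp: vec.subspace_0)
  have "card {X. pg_sub (vec.dim {0::'a^4} + 1) X \<and> {0} \<subseteq> X \<and> X \<subseteq> L} *
     (CARD('a)^(0 + 1) - CARD('a)^0) = CARD('a)^(0+2) - CARD('a)^0"
    using count_step[of "{0}" L] assms unfolding pg_sub_def by (simp add: vec.subspace_0 power2_eq_square)
  then show ?thesis unfolding e by (rule arith_count[OF card_ge2])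
qed

lemma count_planes_line:
  fixes L :: "('a::{field,finite}^4) set"
  assumes "pg_line L"
  shows "card {H. pg_plane H \<and> L \<subseteq> H} = CARD('a) + 1"
proof -
  have e: "{H. pg_plane H \<and> L \<subseteq> H} = {X. pg_sub (vec.dim L + 1) X \<and> L \<subseteq> X \<and> X \<subseteq> UNIV}"
    using assms unfolding pg_sub_def by auto
  have "card {X. pg_sub (vec.dim L + 1) X \<and> L \<subseteq> X \<and> X \<subseteq> UNIV} *
     (CARD('a)^(2 + 1) - CARD('a)^2) = CARD('a)^(2+2) - CARD('a)^2"
    using count_step[of L UNIV] assms unfolding pg_sub_def by (simp add: card_cart_basis)
  then show ?thesis unfolding e by (rule arith_count[OF card_ge2])
qed

lemma count_lines_point_plane:
  fixes P H :: "('a::{field,finite}^4) set"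
  assumes "pg_point P" "pg_plane H" "P \<subseteq> H"
  shows "card {M. pg_line M \<and> P \<subseteq> M \<and> M \<subseteq> H} = CARD('a) + 1"
proof -
  have e: "{M. pg_line M \<and> P \<subseteq> M \<and> M \<subseteq> H} = {X. pg_sub (vec.dim P + 1) X \<and> P \<subseteq> X \<and> X \<subseteq> H}"
    using assms unfolding pg_sub_def by auto
  have "card {X. pg_sub (vec.dim P + 1) X \<and> P \<subseteq> X \<and> X \<subseteq> H} *
     (CARD('a)^(1 + 1) - CARD('a)^1) = CARD('a)^(1+2) - CARD('a)^1"
    using count_step[of P H] assms unfolding pg_sub_def by (simp add: power2_eq_square power3_eq_cube mult_ac)
  then show ?thesis unfolding e by (rule arith_count[OF card_ge2])
qed

lemma double_count:
  assumes "finite A" "finite B"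
  shows "(\<Sum>a\<in>A. \<Sum>b\<in>{b\<in>B. R a b}. f b) = (\<Sum>b\<in>B. card {a\<in>A. R a b} * f b)"
proof -
  have "(\<Sum>a\<in>A. \<Sum>b\<in>{b\<in>B. R a b}. f b) = (\<Sum>a\<in>A. \<Sum>b\<in>B. if R a b then f b else 0)"
    using assms by (simp add: sum.inter_filter)
  also have "\<dots> = (\<Sum>b\<in>B. \<Sum>a\<in>A. if R a b then f b else 0)" by (rule sum.swap)
  also have "\<dots> = (\<Sum>b\<in>B. card {a\<in>A. R a b} * f b)"
    using assms by (simp add: sum.inter_filter[symmetric])
  finally show ?thesis .
qed

lemma point_of_vec:
  fixes v :: "'a::field^4"
  assumes "v \<noteq> 0" shows "pg_point (vec.span {v})"
proof -
  have "v \<notin> vec.span {}" using assms by simp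
  then have "vec.dim {v} = 1" using vec.dim_insert[of v "{}"] by simp
  then show ?thesis unfolding pg_sub_def by simp
qed

lemma line2:
  fixes R P :: "('a::field^4) set"
  assumes R: "pg_point R" and P: "pg_point P" and ne: "P \<noteq> R"
  shows "\<exists>M. pg_line M \<and> R \<subseteq> M \<and> P \<subseteq> M \<and> (\<forall>M'. pg_line M' \<and> R \<subseteq> M' \<and> P \<subseteq> M' \<longrightarrow> M' = M)
     \<and> (\<forall>H. vec.subspace H \<and> R \<subseteq> H \<and> P \<subseteq> H \<longrightarrow> M \<subseteq> H)"
proof -
  have sR: "vec.subspace R" "vec.dim R = 1" using R unfolding pg_sub_def by auto
  have nP: "\<not> P \<subseteq> R" using point_eq[OF R P] ne by blast
  obtain w where w: "w \<in> P" "w \<notin> R"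
    and e: "{X. pg_sub (vec.dim R + 1) X \<and> R \<subseteq> X \<and> P \<subseteq> X} = {vec.span (insert w R)}"
    using unique_ext[OF sR(1) P nP] by blast
  have e2: "{X. pg_line X \<and> R \<subseteq> X \<and> P \<subseteq> X} = {vec.span (insert w R)}"
    using e sR(2) by (simp add: numeral_2_eq_2)
  have sub: "vec.span (insert w R) \<subseteq> H" if "vec.subspace H" "R \<subseteq> H" "P \<subseteq> H" for H
    using that w(1) vec.span_minimal[of "insert w R" H] by auto
  show ?thesis
    apply (rule exI[of _ "vec.span (insert w R)"])
    using e2 sub by blast
qed

lemma plane_through:
  fixes L X :: "('a::field^4) set"
  assumes L: "pg_line L" and X: "pg_point X" and nX: "\<not> X \<subseteq> L"
    and H1: "pg_plane H1" "L \<subseteq> H1" "X \<subseteq> H1" and H2: "pg_plane H2" "L \<subseteq> H2" "X \<subseteq> H2"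
  shows "H1 = H2"
proof -
  have sL: "vec.subspace L" "vec.dim L = 2" using L unfolding pg_sub_def by auto
  obtain w where e: "{Y. pg_sub (vec.dim L + 1) Y \<and> L \<subseteq> Y \<and> X \<subseteq> Y} = {vec.span (insert w L)}"
    using unique_ext[OF sL(1) X nX] by blast
  then have "H1 \<in> {vec.span (insert w L)}" "H2 \<in> {vec.span (insert w L)}"
    using sL(2) H1 H2 by (auto simp: eval_nat_numeral)
  then show ?thesis by simp
qed

lemma plane_meets_line:
  fixes H L :: "('a::field^4) set"
  assumes H: "pg_plane H" and L: "pg_line L"
  shows "\<exists>P. pg_point P \<and> P \<subseteq> H \<and> P \<subseteq> L"
proof -
  have sH: "vec.subspace H" "vec.dim H = 3" using H unfolding pg_sub_def by auto
  have sL: "vec.subspace L" "vec.dim L = 2" using L unfolding pg_sub_def by auto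
  have "vec.dim {x + y |x y. x \<in> H \<and> y \<in> L} \<le> 4"
    using vec.dim_subset_UNIV[of "{x + y |x y. x \<in> H \<and> y \<in> L}"]
    by (simp add: vec.dimension_def card_cart_basis)
  then have "vec.dim (H \<inter> L) \<ge> 1" using vec.dim_sums_Int[OF sH(1) sL(1)] sH(2) sL(2) by linarith
  then have "\<not> H \<inter> L \<subseteq> {0}" using vec.dim_eq_0[of "H \<inter> L"] by linarith
  then obtain v where v: "v \<in> H" "v \<in> L" "v \<noteq> 0" by blast
  have "vec.span {v} \<subseteq> H" "vec.span {v} \<subseteq> L"
    using v sH(1) sL(1) vec.span_minimal[of "{v}"] by auto
  then show ?thesis using point_of_vec[OF v(3)] by blast
qed

lemma line2_unique:
  fixes R P M M' :: "('a::field^4) set"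
  assumes R: "pg_point R" and P: "pg_point P" and ne: "P \<noteq> R"
    and M: "pg_line M" "R \<subseteq> M" "P \<subseteq> M" and M': "pg_line M'" "R \<subseteq> M'" "P \<subseteq> M'"
  shows "M = M'"
proof -
  from line2[OF R P ne] obtain M0 where M0c: "pg_line M0 \<and> R \<subseteq> M0 \<and> P \<subseteq> M0 \<and>
      (\<forall>M'. pg_line M' \<and> R \<subseteq> M' \<and> P \<subseteq> M' \<longrightarrow> M' = M0) \<and>
      (\<forall>H. vec.subspace H \<and> R \<subseteq> H \<and> P \<subseteq> H \<longrightarrow> M0 \<subseteq> H)" ..
  then have u: "\<forall>M'. pg_line M' \<and> R \<subseteq> M' \<and> P \<subseteq> M' \<longrightarrow> M' = M0" by (elim conjE) assumption
  show ?thesis using u[rule_format, OF conjI[OF M(1) conjI[OF M(2) M(3)]]]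
    u[rule_format, OF conjI[OF M'(1) conjI[OF M'(2) M'(3)]]] by simp
qed

lemma line2_sub:
  fixes R P M H :: "('a::field^4) set"
  assumes R: "pg_point R" and P: "pg_point P" and ne: "P \<noteq> R"
    and M: "pg_line M" "R \<subseteq> M" "P \<subseteq> M" and H: "vec.subspace H" "R \<subseteq> H" "P \<subseteq> H"
  shows "M \<subseteq> H"
proof -
  from line2[OF R P ne] obtain M0 where M0c: "pg_line M0 \<and> R \<subseteq> M0 \<and> P \<subseteq> M0 \<and>
      (\<forall>M'. pg_line M' \<and> R \<subseteq> M' \<and> P \<subseteq> M' \<longrightarrow> M' = M0) \<and>
      (\<forall>H. vec.subspace H \<and> R \<subseteq> H \<and> P \<subseteq> H \<longrightarrow> M0 \<subseteq> H)" ..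
  have u: "\<forall>M'. pg_line M' \<and> R \<subseteq> M' \<and> P \<subseteq> M' \<longrightarrow> M' = M0"
    using M0c by (elim conjE) assumption
  have v: "\<forall>H. vec.subspace H \<and> R \<subseteq> H \<and> P \<subseteq> H \<longrightarrow> M0 \<subseteq> H"
    using M0c by (elim conjE) assumption
  have "M = M0" using u[rule_format, OF conjI[OF M(1) conjI[OF M(2) M(3)]]] .
  then show ?thesis using v[rule_format, OF conjI[OF H(1) conjI[OF H(2) H(3)]]] by simp
qed

lemma line2_ex:
  fixes R P :: "('a::field^4) set"
  assumes R: "pg_point R" and P: "pg_point P" and ne: "P \<noteq> R"
  obtains M where "pg_line M" "R \<subseteq> M" "P \<subseteq> M"
proof -
  from line2[OF R P ne] obtain M0 where M0c: "pg_line M0 \<and> R \<subseteq> M0 \<and> P \<subseteq> M0 \<and>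
      (\<forall>M'. pg_line M' \<and> R \<subseteq> M' \<and> P \<subseteq> M' \<longrightarrow> M' = M0) \<and>
      (\<forall>H. vec.subspace H \<and> R \<subseteq> H \<and> P \<subseteq> H \<longrightarrow> M0 \<subseteq> H)" ..
  then show ?thesis using that by blast
qed

locale divset =
  fixes S :: "('a::{field,finite}^4) set set"
  assumes points: "\<forall>P\<in>S. pg_point P"
    and card_S: "card S = CARD('a)^2"
    and div: "q_divisible CARD('a) S"
begin

definition pls :: "('a^4) set \<Rightarrow> ('a^4) set set" where "pls M = {H. pg_plane H \<and> M \<subseteq> H}"
definition lns :: "('a^4) set \<Rightarrow> ('a^4) set set" where "lns P = {M. pg_line M \<and> P \<subseteq> M}"
abbreviation c where "c W \<equiv> meet_card S W"

lemma q2: "2 \<le> CARD('a)" by (rule card_ge2)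

lemma c_le: "c W \<le> CARD('a)^2"
  unfolding meet_card_def using card_mono[of S "{P \<in> S. P \<subseteq> W}"] card_S by auto

lemma c_mono: "W \<subseteq> W' \<Longrightarrow> c W \<le> c W'"
  unfolding meet_card_def by (rule card_mono) auto

lemma plane_dvd: "pg_plane H \<Longrightarrow> CARD('a) dvd c H"
proof -
  assume "pg_plane H"
  then have "c H mod CARD('a) = card S mod CARD('a)" using div unfolding q_divisible_def by blast
  also have "\<dots> = 0" using card_S by simp
  finally show ?thesis by (simp add: dvd_eq_mod_eq_0)
qed

lemma c_pos: "P \<in> S \<Longrightarrow> P \<subseteq> W \<Longrightarrow> 1 \<le> c W"
  unfolding meet_card_def by (metis (mono_tags, lifting) One_nat_def Suc_leI card_gt_0_iff empty_iff finite mem_Collect_eq)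

lemma plane_ge: "pg_plane H \<Longrightarrow> P \<in> S \<Longrightarrow> P \<subseteq> H \<Longrightarrow> CARD('a) \<le> c H"
  using plane_dvd c_pos by (metis dvd_imp_le not_one_le_zero le0 le_neq_implies_less less_le_trans)

lemma F2: assumes M: "pg_line M"
  shows "(\<Sum>H\<in>pls M. c H) = CARD('a) * c M + CARD('a)^2"
proof -
  have "(\<Sum>H\<in>pls M. c H) = (\<Sum>H\<in>pls M. card {P\<in>S. P \<subseteq> H} * 1)"
    unfolding meet_card_def by simp
  also have "\<dots> = (\<Sum>P\<in>S. \<Sum>H\<in>{H\<in>pls M. P \<subseteq> H}. 1)"
    by (rule double_count[symmetric]) auto
  also have "\<dots> = (\<Sum>P\<in>S. if P \<subseteq> M then CARD('a) + 1 else 1)"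
  proof (rule sum.cong[OF refl])
    fix P assume P: "P \<in> S"
    show "(\<Sum>H\<in>{H\<in>pls M. P \<subseteq> H}. 1) = (if P \<subseteq> M then CARD('a) + 1 else 1)"
    proof (cases "P \<subseteq> M")
      case True
      then have "{H\<in>pls M. P \<subseteq> H} = pls M" unfolding pls_def by auto
      then show ?thesis using True count_planes_line[OF M] unfolding pls_def by simp
    next
      case False
      have sM: "vec.subspace M" "vec.dim M = 2" using M unfolding pg_sub_def by auto
      obtain w where "{X. pg_sub (vec.dim M + 1) X \<and> M \<subseteq> X \<and> P \<subseteq> X} = {vec.span (insert w M)}"
        using unique_ext[OF sM(1) _ False] points P by blast
      moreover have "{H\<in>pls M. P \<subseteq> H} = {X. pg_sub (vec.dim M + 1) X \<and> M \<subseteq> X \<and> P \<subseteq> X}"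
        unfolding pls_def using sM by auto
      ultimately show ?thesis using False by simp
    qed
  qed
  also have "\<dots> = (CARD('a) + 1) * c M + (CARD('a)^2 - c M)"
  proof -
    have "(\<Sum>P\<in>S. if P \<subseteq> M then CARD('a) + 1 else 1) = 
       (\<Sum>P\<in>{P\<in>S. P \<subseteq> M}. CARD('a) + 1) + (\<Sum>P\<in>{P\<in>S. \<not> P \<subseteq> M}. 1)"
      by (simp add: sum.If_cases Int_def conj_commute)
    also have "\<dots> = (CARD('a)+1) * c M + card {P\<in>S. \<not> P \<subseteq> M}" unfolding meet_card_def by simp
    also have "card {P\<in>S. \<not> P \<subseteq> M} = CARD('a)^2 - c M"
    proof -
      have "{P\<in>S. \<not> P \<subseteq> M} = S - {P\<in>S. P \<subseteq> M}" by auto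
      then show ?thesis using card_S unfolding meet_card_def by (simp add: card_Diff_subset)
    qed
    finally show ?thesis .
  qed
  also have "\<dots> = CARD('a) * c M + CARD('a)^2" using c_le[of M] by simp
  finally show ?thesis .
qed

lemma F2d: assumes M: "pg_line M" and s: "1 \<le> c M"
  shows "(\<Sum>H\<in>pls M. c H - CARD('a)) = CARD('a) * (c M - 1)"
proof -
  obtain P where P: "P \<in> S" "P \<subseteq> M"
    using s unfolding meet_card_def by (metis (mono_tags, lifting) card.empty empty_Collect_eq not_one_le_zero)
  have ge: "\<forall>H\<in>pls M. CARD('a) \<le> c H" using plane_ge P unfolding pls_def by blast
  have "(\<Sum>H\<in>pls M. c H - CARD('a)) = (\<Sum>H\<in>pls M. c H) - (\<Sum>H\<in>pls M. CARD('a))"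
    using ge by (intro sum_subtractf_nat) auto
  also have "\<dots> = CARD('a) * c M + CARD('a)^2 - (CARD('a) + 1) * CARD('a)"
    using F2[OF M] count_planes_line[OF M] unfolding pls_def by simp
  also have "\<dots> = CARD('a) * (c M - 1)"
  proof -
    obtain s' where "c M = Suc s'" using s by (cases "c M") auto
    then show ?thesis by (simp add: power2_eq_square algebra_simps)
  qed
  finally show ?thesis .
qed

lemma L6: assumes P: "P \<in> S"
  shows "(\<Sum>M\<in>lns P. c M) = card (lns P) + (CARD('a)^2 - 1)"
proof -
  have pP: "pg_point P" using points P by blast
  have sP: "vec.subspace P" "vec.dim P = 1" using pP unfolding pg_sub_def by auto
  have "(\<Sum>M\<in>lns P. c M) = (\<Sum>M\<in>lns P. card {Q\<in>S. Q \<subseteq> M} * 1)"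
    unfolding meet_card_def by simp
  also have "\<dots> = (\<Sum>Q\<in>S. \<Sum>M\<in>{M\<in>lns P. Q \<subseteq> M}. 1)"
    by (rule double_count[symmetric]) auto
  also have "\<dots> = (\<Sum>Q\<in>S. if Q = P then card (lns P) else 1)"
  proof (rule sum.cong[OF refl])
    fix Q assume Q: "Q \<in> S"
    show "(\<Sum>M\<in>{M\<in>lns P. Q \<subseteq> M}. 1) = (if Q = P then card (lns P) else 1)"
    proof (cases "Q = P")
      case True
      then have "{M\<in>lns P. Q \<subseteq> M} = lns P" unfolding lns_def by auto
      then show ?thesis using True by simp
    next
      case False
      have pQ: "pg_point Q" using points Q by blast
      have nQ: "\<not> Q \<subseteq> P" using point_eq[OF pP pQ] False by blast
      obtain w where "{X. pg_sub (vec.dim P + 1) X \<and> P \<subseteq> X \<and> Q \<subseteq> X} = {vec.span (insert w P)}"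
        using unique_ext[OF sP(1) pQ nQ] by blast
      moreover have "{M\<in>lns P. Q \<subseteq> M} = {X. pg_sub (vec.dim P + 1) X \<and> P \<subseteq> X \<and> Q \<subseteq> X}"
        unfolding lns_def using sP by (auto simp: numeral_2_eq_2)
      ultimately show ?thesis using False by simp
    qed
  qed
  also have "\<dots> = card (lns P) + (\<Sum>Q\<in>S - {P}. if Q = P then card (lns P) else 1)"
    using P by (simp add: sum.remove)
  also have "(\<Sum>Q\<in>S - {P}. if Q = P then card (lns P) else 1) = (\<Sum>Q\<in>S - {P}. 1)"
    by (rule sum.cong) auto
  also have "\<dots> = CARD('a)^2 - 1" using P card_S by simp
  finally show ?thesis .
qed

lemma F1: assumes P: "P \<in> S"
  shows "(\<Sum>H\<in>pls P. c H - CARD('a)) = CARD('a) * (CARD('a) - 1)"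
proof -
  have pP: "pg_point P" using points P by blast
  let ?X = "(\<Sum>H\<in>pls P. c H - CARD('a))"
  have cM: "1 \<le> c M" if "M \<in> lns P" for M using c_pos[OF P] that unfolding lns_def by blast
  have "(\<Sum>M\<in>lns P. \<Sum>H\<in>{H\<in>pls P. M \<subseteq> H}. c H - CARD('a)) = (\<Sum>H\<in>pls P. card {M\<in>lns P. M \<subseteq> H} * (c H - CARD('a)))"
    by (rule double_count) auto
  also have "\<dots> = (\<Sum>H\<in>pls P. (CARD('a) + 1) * (c H - CARD('a)))"
  proof (rule sum.cong[OF refl])
    fix H assume H: "H \<in> pls P"
    have "{M\<in>lns P. M \<subseteq> H} = {M. pg_line M \<and> P \<subseteq> M \<and> M \<subseteq> H}" unfolding lns_def by auto
    then show "card {M\<in>lns P. M \<subseteq> H} * (c H - CARD('a)) = (CARD('a) + 1) * (c H - CARD('a))"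
      using count_lines_point_plane[OF pP] H unfolding pls_def by simp
  qed
  also have "\<dots> = (CARD('a) + 1) * ?X" by (simp add: sum_distrib_left)
  finally have e1: "(\<Sum>M\<in>lns P. \<Sum>H\<in>{H\<in>pls P. M \<subseteq> H}. c H - CARD('a)) = (CARD('a) + 1) * ?X" .
  have "(\<Sum>M\<in>lns P. \<Sum>H\<in>{H\<in>pls P. M \<subseteq> H}. c H - CARD('a)) = (\<Sum>M\<in>lns P. CARD('a) * (c M - 1))"
  proof (rule sum.cong[OF refl])
    fix M assume M: "M \<in> lns P"
    have "{H\<in>pls P. M \<subseteq> H} = pls M" using M unfolding pls_def lns_def by auto
    then show "(\<Sum>H\<in>{H\<in>pls P. M \<subseteq> H}. c H - CARD('a)) = CARD('a) * (c M - 1)"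
      using F2d[OF _ cM[OF M]] M unfolding lns_def by simp
  qed
  also have "\<dots> = CARD('a) * ((\<Sum>M\<in>lns P. c M) - (\<Sum>M\<in>lns P. 1))"
    using cM by (simp add: sum_distrib_left[symmetric] sum_subtractf_nat)
  also have "\<dots> = CARD('a) * (CARD('a)^2 - 1)" using L6[OF P] by simp
  also have "\<dots> = (CARD('a) + 1) * (CARD('a) * (CARD('a) - 1))"
    by (simp add: power2_eq_square algebra_simps diff_mult_distrib2)
  finally have "(CARD('a) + 1) * ?X = (CARD('a) + 1) * (CARD('a) * (CARD('a) - 1))" using e1 by simp
  then show ?thesis by (metis mult_cancel1 add_eq_0_iff_both_eq_0 one_neq_zero)
qed

lemma d_ge: assumes "pg_plane H" "c H - CARD('a) \<noteq> 0" shows "CARD('a) \<le> c H - CARD('a)"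
proof -
  have "CARD('a) dvd c H" using plane_dvd assms(1) by blast
  then have "CARD('a) dvd c H - CARD('a)" by (simp add: dvd_diff_nat)
  then show ?thesis using assms(2) by (simp add: dvd_imp_le)
qed

lemma SL_pts: "{P\<in>S. P \<subseteq> W} = {P. pg_point P \<and> P \<subseteq> W} \<inter> S"
  using points by auto

lemma c_le_line: assumes "pg_line L" shows "c L \<le> CARD('a) + 1"
proof -
  have "c L \<le> card {P. pg_point P \<and> P \<subseteq> L}"
    unfolding meet_card_def SL_pts by (rule card_mono) auto
  then show ?thesis using count_pts_line[OF assms] by simp
qed

lemma no_full: assumes L: "pg_line L" shows "c L \<noteq> CARD('a) + 1"
proof
  assume t: "c L = CARD('a) + 1"
  have ge: "CARD('a) \<le> c H - CARD('a)" if "H \<in> pls L" for H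
  proof -
    have H: "pg_plane H" "L \<subseteq> H" using that unfolding pls_def by auto
    have "CARD('a) + 1 \<le> c H" using c_mono[OF H(2)] t by simp
    then have "c H - CARD('a) \<noteq> 0" by simp
    then show ?thesis using d_ge H(1) by blast
  qed
  have "(\<Sum>H\<in>pls L. CARD('a)) \<le> (\<Sum>H\<in>pls L. c H - CARD('a))" using ge by (intro sum_mono) auto
  also have "\<dots> = CARD('a) * (c L - 1)" using F2d[OF L] t by simp
  finally have "(CARD('a) + 1) * CARD('a) \<le> CARD('a) * CARD('a)" using count_planes_line[OF L] t unfolding pls_def by simp
  then show False using q2 by simp
qed

lemma sum_zero_rest:
  fixes B :: "('a^4) set set"
  assumes "A \<subseteq> B" "\<And>H. H \<in> B - A \<Longrightarrow> f H = (0::nat)"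
  shows "sum f B = sum f A"
  using sum.mono_neutral_right[of B A f] assms by auto

lemma cyl: assumes L: "pg_line L" and t: "c L = CARD('a)" shows "two_cylinder CARD('a) S"
proof -
  let ?pL = "{P. pg_point P \<and> P \<subseteq> L}"
  have "card (?pL \<inter> S) = CARD('a)" using t unfolding meet_card_def SL_pts by simp
  moreover have "?pL - S = ?pL - ?pL \<inter> S" by blast
  ultimately have "card (?pL - S) = 1"
    using count_pts_line[OF L] card_Diff_subset[of "?pL \<inter> S" ?pL] by simp
  then obtain R where R: "?pL - S = {R}" by (rule card_1_singletonE)
  have Rp: "pg_point R" "R \<subseteq> L" "R \<notin> S" using R by auto
  have pL_S: "P \<in> S" if "pg_point P" "P \<subseteq> L" "P \<noteq> R" for P
    using R that by blast
  have zero: "c H - CARD('a) = 0" if P: "P \<in> S" "P \<subseteq> L" and H: "H \<in> pls P" "\<not> L \<subseteq> H" for P H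
  proof -
    have sub: "pls L \<subseteq> pls P" using P unfolding pls_def by auto
    have "(\<Sum>H\<in>pls P. c H - CARD('a)) = (\<Sum>H\<in>pls P - pls L. c H - CARD('a)) + (\<Sum>H\<in>pls L. c H - CARD('a))"
      using sub by (simp add: sum.subset_diff)
    moreover have "(\<Sum>H\<in>pls P. c H - CARD('a)) = CARD('a) * (CARD('a) - 1)" using F1[OF P(1)] .
    moreover have "(\<Sum>H\<in>pls L. c H - CARD('a)) = CARD('a) * (CARD('a) - 1)" using F2d[OF L] t q2 by simp
    ultimately have "(\<Sum>H\<in>pls P - pls L. c H - CARD('a)) = 0" by simp
    moreover have "H \<in> pls P - pls L" using H unfolding pls_def by auto
    ultimately show ?thesis by simp
  qed
  have cM: "c M = CARD('a)" if Q: "Q \<in> S" and M: "pg_line M" "R \<subseteq> M" "Q \<subseteq> M" for Q M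
  proof -
    have pQ: "pg_point Q" using points Q by blast
    have QR: "Q \<noteq> R" using Q Rp(3) by blast
    from line2[OF Rp(1) pQ QR] obtain M0 where M0c: "pg_line M0 \<and> R \<subseteq> M0 \<and> Q \<subseteq> M0 \<and>
      (\<forall>M'. pg_line M' \<and> R \<subseteq> M' \<and> Q \<subseteq> M' \<longrightarrow> M' = M0) \<and>
      (\<forall>H. vec.subspace H \<and> R \<subseteq> H \<and> Q \<subseteq> H \<longrightarrow> M0 \<subseteq> H)" ..
    note M0 = M0c[THEN conjunct1] M0c[THEN conjunct2, THEN conjunct1]
      M0c[THEN conjunct2, THEN conjunct2, THEN conjunct1]
      M0c[THEN conjunct2, THEN conjunct2, THEN conjunct2, THEN conjunct1]
      M0c[THEN conjunct2, THEN conjunct2, THEN conjunct2, THEN conjunct2]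
    have MM0: "M = M0" using M0(4)[rule_format, OF conjI[OF M(1) conjI[OF M(2) M(3)]]] .
    have RH: "R \<subseteq> H" if H: "H \<in> pls Q" "c H - CARD('a) \<noteq> 0" for H
    proof -
      have pH: "pg_plane H" using H unfolding pls_def by auto
      obtain P' where P': "pg_point P'" "P' \<subseteq> H" "P' \<subseteq> L" using plane_meets_line[OF pH L] by blast
      show ?thesis
      proof (cases "P' = R")
        case True then show ?thesis using P' by simp
      next
        case False
        then have "P' \<in> S" using pL_S P' by blast
        moreover have "H \<in> pls P'" using pH P' unfolding pls_def by auto
        ultimately have "L \<subseteq> H" using zero[of P' H] P' H(2) by blast
        then show ?thesis using Rp(2) by blast
      qed
    qed
    have sub: "pls M \<subseteq> pls Q" using M unfolding pls_def by auto
    have "(\<Sum>H\<in>pls Q. c H - CARD('a)) = (\<Sum>H\<in>pls M. c H - CARD('a))"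
    proof (rule sum_zero_rest[OF sub])
      fix H assume H: "H \<in> pls Q - pls M"
      show "c H - CARD('a) = 0"
      proof (rule ccontr)
        assume nz: "c H - CARD('a) \<noteq> 0"
        have "vec.subspace H" "Q \<subseteq> H" using H unfolding pls_def pg_sub_def by auto
        then have "M0 \<subseteq> H" using M0(5) RH[OF _ nz] H by blast
        then show False using H MM0 unfolding pls_def by auto
      qed
    qed
    moreover have "1 \<le> c M" using c_pos[OF Q M(3)] .
    ultimately have "CARD('a) * (c M - 1) = CARD('a) * (CARD('a) - 1)" using F1[OF Q] F2d[OF M(1)] by simp
    then have "c M - 1 = CARD('a) - 1" using q2 by simp
    then show ?thesis using \<open>1 \<le> c M\<close> q2 by linarith
  qed
  have inS: "P \<in> S" if M: "pg_line M" "R \<subseteq> M" "c M = CARD('a)" and P: "pg_point P" "P \<subseteq> M" "P \<noteq> R" for M P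
  proof -
    let ?pM = "{P. pg_point P \<and> P \<subseteq> M}"
    have s1: "{P\<in>S. P \<subseteq> M} \<subseteq> ?pM - {R}" using points Rp(3) by auto
    have c1: "card {P\<in>S. P \<subseteq> M} = CARD('a)" using M(3) unfolding meet_card_def .
    have c2: "card (?pM - {R}) = CARD('a)" using count_pts_line[OF M(1)] Rp(1) M(2) by simp
    have "{P\<in>S. P \<subseteq> M} = ?pM - {R}" using card_subset_eq[OF _ s1] c1 c2 by simp
    then show ?thesis using P by blast
  qed
  define Ls where "Ls = {M. pg_line M \<and> R \<subseteq> M \<and> (\<exists>Q\<in>S. Q \<subseteq> M)}"
  have LsC: "c M = CARD('a)" if "M \<in> Ls" for M using that cM unfolding Ls_def by blast
  have exM: "\<exists>M\<in>Ls. P \<subseteq> M" if P: "P \<in> S" for P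
  proof -
    have "pg_point P" "P \<noteq> R" using points P Rp(3) by auto
    then obtain M where "pg_line M" "R \<subseteq> M" "P \<subseteq> M" using line2_ex[OF Rp(1), of P] by blast
    then show ?thesis using P unfolding Ls_def by blast
  qed
  have Seq: "S = {P. pg_point P \<and> P \<noteq> R \<and> (\<exists>M\<in>Ls. P \<subseteq> M)}"
  proof
    show "S \<subseteq> {P. pg_point P \<and> P \<noteq> R \<and> (\<exists>M\<in>Ls. P \<subseteq> M)}" using points Rp(3) exM by blast
    show "{P. pg_point P \<and> P \<noteq> R \<and> (\<exists>M\<in>Ls. P \<subseteq> M)} \<subseteq> S"
    proof
      fix P assume "P \<in> {P. pg_point P \<and> P \<noteq> R \<and> (\<exists>M\<in>Ls. P \<subseteq> M)}"
      then obtain M where MP: "pg_point P" "P \<noteq> R" "M \<in> Ls" "P \<subseteq> M" by blast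
      then have "pg_line M" "R \<subseteq> M" unfolding Ls_def by auto
      then show "P \<in> S" using inS[OF _ _ LsC[OF MP(3)] MP(1) MP(4) MP(2)] by blast
    qed
  qed
  have cover: "S = (\<Union>M\<in>Ls. {P\<in>S. P \<subseteq> M})" using exM by blast
  have disj: "\<forall>M\<in>Ls. \<forall>M'\<in>Ls. M \<noteq> M' \<longrightarrow> {P\<in>S. P \<subseteq> M} \<inter> {P\<in>S. P \<subseteq> M'} = {}"
  proof (intro ballI impI)
    fix M M' assume MM: "M \<in> Ls" "M' \<in> Ls" "M \<noteq> M'"
    show "{P\<in>S. P \<subseteq> M} \<inter> {P\<in>S. P \<subseteq> M'} = {}"
    proof (rule ccontr)
      assume "{P\<in>S. P \<subseteq> M} \<inter> {P\<in>S. P \<subseteq> M'} \<noteq> {}"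
      then obtain P where P: "P \<in> S" "P \<subseteq> M" "P \<subseteq> M'" by blast
      have pP: "pg_point P" "P \<noteq> R" using points P Rp(3) by auto
      have "pg_line M" "R \<subseteq> M" "pg_line M'" "R \<subseteq> M'" using MM unfolding Ls_def by auto
      then have "M = M'" using line2_unique[OF Rp(1) pP(1) pP(2)] P by blast
      then show False using MM by simp
    qed
  qed
  have "CARD('a)^2 = card (\<Union>M\<in>Ls. {P\<in>S. P \<subseteq> M})" using cover card_S by simp
  also have "\<dots> = (\<Sum>M\<in>Ls. card {P\<in>S. P \<subseteq> M})" by (rule card_UN_disjoint) (use disj in auto)
  also have "\<dots> = (\<Sum>M\<in>Ls. CARD('a))" using LsC unfolding meet_card_def by simp
  also have "\<dots> = card Ls * CARD('a)" by simp
  finally have "card Ls = CARD('a)" using q2 by (simp add: power2_eq_square)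
  moreover have "\<forall>M\<in>Ls. pg_line M \<and> R \<subseteq> M" unfolding Ls_def by blast
  ultimately show ?thesis unfolding two_cylinder_def
    using Rp(1) Seq by blast
qed

lemma ex_in: assumes "1 \<le> c W" obtains P where "P \<in> S" "P \<subseteq> W"
proof -
  have "{P\<in>S. P \<subseteq> W} \<noteq> {}" using assms unfolding meet_card_def by (metis card.empty not_one_le_zero)
  then show ?thesis using that by blast
qed

lemma qm1: assumes L: "pg_line L" and t: "c L = CARD('a) - 1" shows "\<exists>N. pg_line N \<and> c N = CARD('a)"
proof -
  have t1: "1 \<le> c L" using t q2 by simp
  obtain P0 where P0: "P0 \<in> S" "P0 \<subseteq> L" using ex_in[OF t1] by blast
  have sumL: "(\<Sum>H\<in>pls L. c H - CARD('a)) = CARD('a) * (CARD('a) - 2)" using F2d[OF L t1] t by simp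
  define Z where "Z = {H\<in>pls L. c H - CARD('a) = 0}"
  have "\<not> (\<forall>a\<in>Z. \<forall>b\<in>Z. a = b)"
  proof
    assume all: "\<forall>a\<in>Z. \<forall>b\<in>Z. a = b"
    have fZ: "finite Z" by simp
    have cZ: "card Z \<le> 1" using card_le_Suc0_iff_eq[OF fZ] all by simp
    have ZL: "Z \<subseteq> pls L" unfolding Z_def by auto
    have cP: "card (pls L) = CARD('a) + 1" using count_planes_line[OF L] unfolding pls_def by simp
    have cD: "CARD('a) \<le> card (pls L - Z)" using card_Diff_subset[OF _ ZL] cZ cP by simp
    have "CARD('a) * CARD('a) \<le> card (pls L - Z) * CARD('a)" using cD by simp
    also have "\<dots> = (\<Sum>H\<in>pls L - Z. CARD('a))" by simp
    also have "\<dots> \<le> (\<Sum>H\<in>pls L - Z. c H - CARD('a))"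
    proof (rule sum_mono)
      fix H assume H: "H \<in> pls L - Z"
      then have "pg_plane H" "c H - CARD('a) \<noteq> 0" unfolding Z_def pls_def by auto
      then show "CARD('a) \<le> c H - CARD('a)" using d_ge by blast
    qed
    also have "\<dots> \<le> (\<Sum>H\<in>pls L. c H - CARD('a))" by (rule sum_mono2) auto
    also have "\<dots> = CARD('a) * (CARD('a) - 2)" by (rule sumL)
    finally have "CARD('a) * CARD('a) \<le> CARD('a) * (CARD('a) - 2)" .
    then show False using q2 by (simp add: mult_le_cancel1)
  qed
  then obtain pi1 pi2 where pi: "pi1 \<in> pls L" "pi2 \<in> pls L" "pi1 \<noteq> pi2" "c pi1 - CARD('a) = 0" "c pi2 - CARD('a) = 0"
    unfolding Z_def by blast
  have exX: "\<exists>X. X \<in> S \<and> X \<subseteq> pi \<and> \<not> X \<subseteq> L" if pi: "pi \<in> pls L" "c pi - CARD('a) = 0" for pi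
  proof (rule ccontr)
    assume "\<not> (\<exists>X. X \<in> S \<and> X \<subseteq> pi \<and> \<not> X \<subseteq> L)"
    then have "{P\<in>S. P \<subseteq> pi} \<subseteq> {P\<in>S. P \<subseteq> L}" by blast
    then have "c pi \<le> c L" unfolding meet_card_def by (rule card_mono[rotated]) simp
    moreover have "CARD('a) \<le> c pi"
    proof -
      have "pg_plane pi" "L \<subseteq> pi" using pi(1) unfolding pls_def by auto
      then show ?thesis using plane_ge[OF _ P0(1)] P0(2) by blast
    qed
    ultimately show False using t q2 by simp
  qed
  define A where "A P = {H\<in>pls P. \<not> L \<subseteq> H \<and> c H - CARD('a) \<noteq> 0}" for P
  have Auniq: "H1 = H2" if P: "P \<in> S" "P \<subseteq> L" and H: "H1 \<in> A P" "H2 \<in> A P" for P H1 H2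
  proof (rule ccontr)
    assume ne: "H1 \<noteq> H2"
    have sub: "pls L \<subseteq> pls P" using P unfolding pls_def by auto
    have "(\<Sum>H\<in>pls P. c H - CARD('a)) = (\<Sum>H\<in>pls P - pls L. c H - CARD('a)) + (\<Sum>H\<in>pls L. c H - CARD('a))"
      using sub by (simp add: sum.subset_diff)
    then have "CARD('a) * (CARD('a) - 1) = (\<Sum>H\<in>pls P - pls L. c H - CARD('a)) + CARD('a) * (CARD('a) - 2)"
      using F1[OF P(1)] sumL by simp
    moreover have "CARD('a) * (CARD('a) - 1) = CARD('a) * (CARD('a) - 2) + CARD('a)"
    proof -
      obtain k where "CARD('a) = k + 2" using q2 by (metis add.commute le_add_diff_inverse)
      then show ?thesis by (simp add: algebra_simps)
    qed
    ultimately have e: "(\<Sum>H\<in>pls P - pls L. c H - CARD('a)) = CARD('a)" by linarith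
    have h: "CARD('a) \<le> c H - CARD('a)" if "H \<in> A P" for H
      using that d_ge unfolding A_def pls_def by blast
    have "{H1, H2} \<subseteq> pls P - pls L" using H unfolding A_def pls_def by auto
    then have "(\<Sum>H\<in>{H1,H2}. c H - CARD('a)) \<le> (\<Sum>H\<in>pls P - pls L. c H - CARD('a))" by (intro sum_mono2) auto
    moreover have "(\<Sum>H\<in>{H1,H2}. c H - CARD('a)) = (c H1 - CARD('a)) + (c H2 - CARD('a))" using ne by simp
    ultimately have "(c H1 - CARD('a)) + (c H2 - CARD('a)) \<le> CARD('a)" using e by simp
    moreover have "CARD('a) \<le> c H1 - CARD('a)" "CARD('a) \<le> c H2 - CARD('a)" using h H by auto
    ultimately show False using q2 by simp
  qed
  have exA: "\<exists>H\<in>A P. X \<subseteq> H" if pi: "pi \<in> pls L" "c pi - CARD('a) = 0" and X: "X \<in> S" "X \<subseteq> pi" "\<not> X \<subseteq> L"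
    and P: "P \<in> S" "P \<subseteq> L" for pi X P
  proof -
    have pX: "pg_point X" and pP: "pg_point P" using points X P by auto
    have XP: "X \<noteq> P" using X P by blast
    obtain M where M: "pg_line M" "P \<subseteq> M" "X \<subseteq> M" using line2_ex[OF pP pX XP] by blast
    have "{P, X} \<subseteq> {Q\<in>S. Q \<subseteq> M}" using M P X by auto
    then have "card {P, X} \<le> c M" unfolding meet_card_def by (rule card_mono[rotated]) simp
    then have cM: "2 \<le> c M" using XP by simp
    then have "(\<Sum>H\<in>pls M. c H - CARD('a)) \<noteq> 0" using F2d[OF M(1)] q2 by simp
    have "\<exists>H\<in>pls M. c H - CARD('a) \<noteq> 0"
    proof (rule ccontr)
      assume "\<not> (\<exists>H\<in>pls M. c H - CARD('a) \<noteq> 0)"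
      then have "(\<Sum>H\<in>pls M. c H - CARD('a)) = 0" by (intro sum.neutral) blast
      then show False using \<open>(\<Sum>H\<in>pls M. c H - CARD('a)) \<noteq> 0\<close> by simp
    qed
    then obtain H where H: "H \<in> pls M" "c H - CARD('a) \<noteq> 0" by blast
    have pH: "pg_plane H" "M \<subseteq> H" using H unfolding pls_def by auto
    have nL: "\<not> L \<subseteq> H"
    proof
      assume "L \<subseteq> H"
      moreover have "pg_plane pi" "L \<subseteq> pi" using pi(1) unfolding pls_def by auto
      moreover have "X \<subseteq> H" using pH(2) M(3) by blast
      ultimately have "pi = H" using plane_through[OF L pX X(3) _ _ X(2) pH(1)] by blast
      then show False using pi(2) H(2) by simp
    qed
    have "H \<in> A P" unfolding A_def pls_def using pH M(2) nL H(2) by auto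
    then show ?thesis using pH M(3) by blast
  qed
  obtain X1 where X1: "X1 \<in> S" "X1 \<subseteq> pi1" "\<not> X1 \<subseteq> L" using exX[OF pi(1) pi(4)] by blast
  obtain X2 where X2: "X2 \<in> S" "X2 \<subseteq> pi2" "\<not> X2 \<subseteq> L" using exX[OF pi(2) pi(5)] by blast
  have pX1: "pg_point X1" and pX2: "pg_point X2" using points X1 X2 by auto
  have X12: "X2 \<noteq> X1"
  proof
    assume "X2 = X1"
    moreover have "pg_plane pi1" "L \<subseteq> pi1" "pg_plane pi2" "L \<subseteq> pi2" using pi(1,2) unfolding pls_def by auto
    ultimately have "pi1 = pi2" using plane_through[OF L pX1 X1(3) _ _ X1(2), of pi2] X2(2) by blast
    then show False using pi(3) by simp
  qed
  obtain N where N: "pg_line N" "X1 \<subseteq> N" "X2 \<subseteq> N" using line2_ex[OF pX1 pX2 X12] by blast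
  define B where "B = {H\<in>pls N. c H - CARD('a) \<noteq> 0 \<and> \<not> L \<subseteq> H}"
  let ?SL = "{P\<in>S. P \<subseteq> L}"
  have left: "1 \<le> card {H\<in>B. P \<subseteq> H}" if P: "P \<in> ?SL" for P
  proof -
    have P': "P \<in> S" "P \<subseteq> L" using P by auto
    obtain H1 where H1: "H1 \<in> A P" "X1 \<subseteq> H1" using exA[OF pi(1) pi(4) X1 P'] by blast
    obtain H2 where H2: "H2 \<in> A P" "X2 \<subseteq> H2" using exA[OF pi(2) pi(5) X2 P'] by blast
    have "H1 = H2" using Auniq[OF P' H1(1) H2(1)] .
    then have "X2 \<subseteq> H1" using H2 by simp
    moreover have "vec.subspace H1" using H1 unfolding A_def pls_def pg_sub_def by auto
    ultimately have "N \<subseteq> H1" using line2_sub[OF pX1 pX2 X12 N _ H1(2)] by blast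
    then have "H1 \<in> {H\<in>B. P \<subseteq> H}" using H1 unfolding A_def B_def pls_def by auto
    then have "{H\<in>B. P \<subseteq> H} \<noteq> {}" by blast
    then show ?thesis by (simp add: Suc_leI card_gt_0_iff)
  qed
  have right: "card {P\<in>?SL. P \<subseteq> H} \<le> 1" if H: "H \<in> B" for H
  proof -
    have sH: "vec.subspace H" "\<not> L \<subseteq> H" using H unfolding B_def pls_def pg_sub_def by auto
    have "\<forall>a\<in>{P\<in>?SL. P \<subseteq> H}. \<forall>b\<in>{P\<in>?SL. P \<subseteq> H}. a = b"
    proof (intro ballI)
      fix a b assume a: "a \<in> {P\<in>?SL. P \<subseteq> H}" and b: "b \<in> {P\<in>?SL. P \<subseteq> H}"
      show "a = b"
      proof (rule ccontr)
        assume ab: "a \<noteq> b"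
        have pa: "pg_point a" "pg_point b" using a b points by auto
        have "a \<subseteq> L" "b \<subseteq> L" "a \<subseteq> H" "b \<subseteq> H" using a b by auto
        then have "L \<subseteq> H" using line2_sub[OF pa(1) pa(2) _ L _ _ sH(1)] ab by blast
        then show False using sH(2) by simp
      qed
    qed
    then show ?thesis using card_le_Suc0_iff_eq[of "{P\<in>?SL. P \<subseteq> H}"] by simp
  qed
  have "card ?SL = (\<Sum>P\<in>?SL. 1)" by simp
  also have "\<dots> \<le> (\<Sum>P\<in>?SL. card {H\<in>B. P \<subseteq> H})" using left by (intro sum_mono) auto
  also have "\<dots> = (\<Sum>P\<in>?SL. \<Sum>H\<in>{H\<in>B. P \<subseteq> H}. 1)" by simp
  also have "\<dots> = (\<Sum>H\<in>B. card {P\<in>?SL. P \<subseteq> H} * 1)" by (rule double_count) auto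
  also have "\<dots> \<le> (\<Sum>H\<in>B. 1)" using right by (intro sum_mono) auto
  also have "\<dots> = card B" by simp
  finally have cB: "CARD('a) - 1 \<le> card B" using t unfolding meet_card_def by simp
  have "CARD('a) * (CARD('a) - 1) \<le> card B * CARD('a)" using cB by (simp add: mult.commute)
  also have "\<dots> = (\<Sum>H\<in>B. CARD('a))" by simp
  also have "\<dots> \<le> (\<Sum>H\<in>B. c H - CARD('a))"
  proof (rule sum_mono)
    fix H assume "H \<in> B"
    then have "pg_plane H" "c H - CARD('a) \<noteq> 0" unfolding B_def pls_def by auto
    then show "CARD('a) \<le> c H - CARD('a)" using d_ge by blast
  qed
  also have "\<dots> \<le> (\<Sum>H\<in>pls N. c H - CARD('a))" by (rule sum_mono2) (auto simp: B_def)
  also have "\<dots> = CARD('a) * (c N - 1)" using F2d[OF N(1) c_pos[OF X1(1) N(2)]] .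
  finally have "CARD('a) * (CARD('a) - 1) \<le> CARD('a) * (c N - 1)" .
  then have "CARD('a) - 1 \<le> c N - 1" using q2 by (simp add: mult_le_cancel1)
  then have "CARD('a) \<le> c N" using q2 by linarith
  then have "c N = CARD('a)" using c_le_line[OF N(1)] no_full[OF N(1)] by linarith
  then show ?thesis using N(1) by blast
qed

end

theorem mainTheorem18:
  fixes S :: "('a::{field,finite} ^ 4) set set"
  defines "q \<equiv> CARD('a)"
  assumes points: "\<forall>P\<in>S. pg_point P"
    and card_S: "card S = q ^ 2"
    and div: "q_divisible q S"
    and span: "spanning S"
    and not_cyl: "\<not> two_cylinder q S"
  shows "\<forall>L. pg_line L \<longrightarrow> meet_card S L \<le> q - 2"
proof -
  interpret D: divset S
    by unfold_locales (use points card_S div in \<open>simp_all add: q_def\<close>)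
  show ?thesis
  proof (intro allI impI)
    fix L :: "('a^4) set" assume L: "pg_line L"
    show "meet_card S L \<le> q - 2"
    proof (rule ccontr)
      assume "\<not> meet_card S L \<le> q - 2"
      then have ge: "q - 1 \<le> meet_card S L" by simp
      have le: "meet_card S L \<le> q" using D.c_le_line[OF L] D.no_full[OF L] unfolding q_def by linarith
      show False
      proof (cases "meet_card S L = q")
        case True
        then show False using D.cyl[OF L] not_cyl unfolding q_def by simp
      next
        case False
        then have "meet_card S L = CARD('a) - 1" using ge le unfolding q_def by simp
        then obtain N where N: "pg_line N" "meet_card S N = CARD('a)" using D.qm1[OF L] by blast
        then show False using D.cyl[OF N(1) N(2)] not_cyl unfolding q_def by simp
      qed
    qed
  qed
qed

end
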